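(* Consider the genus 2 setting described in the context (curve $y^2=x^5+p_2x^3+p_3x^2+p_4x+p_5$, Lax operator $L$ in Tyurin parametrization with gauge $\alpha_3=(1,0)^T$, $\alpha_4=(0,1)^T$, and Hamiltonian $H$). Let $Z$ be the subvariety of the phase space defined by $$\alpha_{11}=\alpha_{22}=0,\qquad \beta_{11}=\beta_{21}=\beta_{12}=\beta_{22}=\beta_{23}=\beta_{14}=0.$$ Then $Z$ is invariant under the Hamiltonian flow of $H$: at every point of $Z$ (where defined) one has $\partial H/\partial\beta_{11}=\partial H/\partial\beta_{22}=0$ and $\partial H/\partial\alpha_{ij}=0$ for $(i,j)\in\{(1,1),(2,1),(1,2),(2,2)\}$. The restriction of $H$ to $Z$ equals $$H^{(r)}=\frac{2(\kappa_1-\kappa_4)(a_4\kappa_1-a_1\kappa_4)}{(a_1-a_4)^2}+\frac{2(\kappa_2-\kappa_3)(a_3\kappa_2-a_2\kappa_3)}{(a_2-a_3)^2},$$ and on $Z$ the Hamiltonian equations take the form $$\dot a_1=-\frac{2(a_1\kappa_4+a_4(\kappa_4-2\kappa_1))}{(a_1-a_4)^2},\quad \dot a_4=-\frac{2(a_4\kappa_1+a_1(\kappa_1-2\kappa_4))}{(a_1-a_4)^2},\quad \dot\kappa_1=\frac{\kappa_1-\kappa_4}{a_1-a_4}\dot a_1,\quad \dot\kappa_4=\frac{\kappa_1-\kappa_4}{a_1-a_4}\dot a_4,$$ $$\dot a_2=-\frac{2(a_2\kappa_3+a_3(\kappa_3-2\kappa_2))}{(a_2-a_3)^2},\quad \dot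 a_3=-\frac{2(a_3\kappa_2+a_2(\kappa_2-2\kappa_3))}{(a_2-a_3)^2},\quad \dot\kappa_2=\frac{\kappa_2-\kappa_3}{a_2-a_3}\dot a_2,\quad \dot\kappa_3=\frac{\kappa_2-\kappa_3}{a_2-a_3}\dot a_3,$$ $$\dot\alpha_{12}=\alpha_{12}\frac{b_2+b_3}{a_2-a_3}\dot a_3,\qquad \dot\alpha_{21}=\alpha_{21}\frac{b_1+b_4}{a_1-a_4}\dot a_4 .$$ In particular, the first eight equations form the Hamiltonian system with Hamiltonian $H^{(r)}$ in the canonical coordinates $(a_s,\kappa_s)_{s=1}^4$.
   Context: Let $\Sigma$ be the genus 2 hyperelliptic curve $y^2=P(x)=x^5+p_2x^3+p_3x^2+p_4x+p_5$ (i.e. the coefficient $p_1$ of $x^4$ is $0$), with $p_2,\dots,p_5\in\mathbb{C}$. Dynamical variables: points $(a_s,b_s)\in\Sigma$, $s=1,\dots,4$, with pairwise distinct $a_s$ (each $b_s$ is regarded as a local branch of $\sqrt{P(a_s)}$, hence a function of $a_s$); numbers $\kappa_1,\dots,\kappa_4$; vectors $\alpha_1=(\alpha_{11},\alpha_{21})^T$, $\alpha_2=(\alpha_{12},\alpha_{22})^T$, $\beta_1=(\beta_{11},\beta_{21})^T$, $\beta_2=(\beta_{12},\beta_{22})^T$, $\beta_3=(0,\beta_{23})^T$, $\beta_4=(\beta_{14},0)^T$, and the gauge-fixed vectors $\alpha_3=(1,0)^T$, $\alpha_4=(0,1)^T$. The Lax operator is $$L(x,y)=A_0+A_1x+\sum_{s=1}^4\alpha_s\beta_s^T\frac{y+b_s}{x-a_s},$$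 where the $2\times2$ matrices $A_0,A_1$ are determined (as rational functions of the remaining variables, for generic values) by the eight scalar linear equations $L(a_s,b_s)\alpha_s=\kappa_s\alpha_s$, $s=1,\dots,4$, in which, in $L(a_s,b_s)$, the singular summand with index $s$ is omitted. Near $x=\infty$ use the local parameter $z$ with $x=z^{-2}$, $y=z^{-5}(1+p_2z^4+p_3z^6+p_4z^8+p_5z^{10})^{1/2}$ (branch equal to $1$ at $z=0$). The Hamiltonian is $$H=-\operatorname{res}_{z=0}\, z^{-4}\,y(z)^{-1}\,\operatorname{tr}\big(L(x(z),y(z))^2\big)\,dz \;=\;\tfrac12\operatorname{res}_{z=0} z^{-1}\operatorname{tr}L^2\,\frac{dx}{y}.$$ The Hamiltonian equations are $\dot a_s=\partial H/\partial\kappa_s$, $\dot\kappa_s=-\partial H/\partial a_s$ ($s=1,\dots,4$, with $b_s$ differentiated as a function of $a_s$), $\dot\alpha_{ij}=\partial H/\partial\beta_{ij}$, $\dot\beta_{ij}=-\partial H/\partial\alpha_{ij}$ for $(i,j)\in\{(1,1),(2,1),(1,2),(2,2)\}$, and $\dot\beta_{23}=\dot\beta_{14}=0$ (their conjugate variables are fixed by the gauge and $H$ does not depend on them). *)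

theory Defs
  imports "HOL-Analysis.Analysis" "HOL-Computational_Algebra.Formal_Laurent_Series"
begin

definition Pc :: "complex \<Rightarrow> complex \<Rightarrow> complex \<Rightarrow> complex \<Rightarrow> complex \<Rightarrow> complex" where
  "Pc p2 p3 p4 p5 x = x^5 + p2 * x^3 + p3 * x^2 + p4 * x + p5"

text \<open>Points of the phase space. The indices s = 1..4 of a_s, b_s, kappa_s are the
  natural numbers 1..4 (values at other indices are irrelevant).  The fields alIJ / beIJ
  are alpha_{IJ} / beta_{IJ}.\<close>
record phase =
  pa   :: "nat \<Rightarrow> complex"
  pb   :: "nat \<Rightarrow> complex"
  kap  :: "nat \<Rightarrow> complex"
  al11 :: complex
  al21 :: complex
  al12 :: complex
  al22 :: complex
  be11 :: complex
  be21 :: complex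
  be12 :: complex
  be22 :: complex
  be23 :: complex
  be14 :: complex

definition alphaV :: "phase \<Rightarrow> nat \<Rightarrow> complex^2" where
  "alphaV st s =
     (if s = 1 then vector [al11 st, al21 st]
      else if s = 2 then vector [al12 st, al22 st]
      else if s = 3 then vector [1, 0]
      else vector [0, 1])"

definition betaV :: "phase \<Rightarrow> nat \<Rightarrow> complex^2" where
  "betaV st s =
     (if s = 1 then vector [be11 st, be21 st]
      else if s = 2 then vector [be12 st, be22 st]
      else if s = 3 then vector [0, be23 st]
      else vector [be14 st, 0])"

definition outer :: "'a::times^'n \<Rightarrow> 'a^'m \<Rightarrow> 'a^'m^'n" where
  "outer u v = (\<chi> i j. u $ i * v $ j)"

definition smat :: "'a::times \<Rightarrow> 'a^'m^'n \<Rightarrow> 'a^'m^'n" where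
  "smat c M = (\<chi> i j. c * M $ i $ j)"

text \<open>L(a_s,b_s) with the singular summand of index s omitted.\<close>
definition lax_at :: "phase \<Rightarrow> complex^2^2 \<Rightarrow> complex^2^2 \<Rightarrow> nat \<Rightarrow> complex^2^2" where
  "lax_at st A0 A1 s =
     A0 + smat (pa st s) A1 +
     (\<Sum>t\<in>{1..4} - {s}. smat ((pb st s + pb st t) / (pa st s - pa st t))
                                (outer (alphaV st t) (betaV st t)))"

definition lax_eqs :: "phase \<Rightarrow> complex^2^2 \<Rightarrow> complex^2^2 \<Rightarrow> bool" where
  "lax_eqs st A0 A1 \<longleftrightarrow>
     (\<forall>s\<in>{1..4}. lax_at st A0 A1 s *v alphaV st s = kap st s *s alphaV st s)"

text \<open>(A_0, A_1) as determined by these equations (meaningful where the solution is unique).\<close>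
definition lax_solution :: "phase \<Rightarrow> (complex^2^2) \<times> (complex^2^2)" where
  "lax_solution st = (THE A. lax_eqs st (fst A) (snd A))"

text \<open>Local parameter z at infinity, as formal Laurent series in z:
  x = z^(-2),  y = z^(-5) (1 + p2 z^4 + p3 z^6 + p4 z^8 + p5 z^10)^(1/2), branch 1 at z = 0.\<close>
definition xz :: "complex fls" where
  "xz = fls_X_intpow (-2)"

definition yz :: "complex \<Rightarrow> complex \<Rightarrow> complex \<Rightarrow> complex \<Rightarrow> complex fls" where
  "yz p2 p3 p4 p5 = fls_X_intpow (-5) *
     fps_to_fls (fps_radical (\<lambda>_ _. 1) 2
       (1 + fps_const p2 * fps_X ^ 4 + fps_const p3 * fps_X ^ 6
          + fps_const p4 * fps_X ^ 8 + fps_const p5 * fps_X ^ 10))"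

definition laxz :: "complex \<Rightarrow> complex \<Rightarrow> complex \<Rightarrow> complex \<Rightarrow> phase \<Rightarrow>
                    complex^2^2 \<Rightarrow> complex^2^2 \<Rightarrow> complex fls^2^2" where
  "laxz p2 p3 p4 p5 st A0 A1 =
     (\<chi> i j. fls_const (A0 $ i $ j) + fls_const (A1 $ i $ j) * xz +
        (\<Sum>s\<in>{1..4}. fls_const (alphaV st s $ i * betaV st s $ j) *
            ((yz p2 p3 p4 p5 + fls_const (pb st s)) / (xz - fls_const (pa st s)))))"

definition Ham :: "complex \<Rightarrow> complex \<Rightarrow> complex \<Rightarrow> complex \<Rightarrow> phase \<Rightarrow> complex" where
  "Ham p2 p3 p4 p5 st =
     (let A = lax_solution st; L = laxz p2 p3 p4 p5 st (fst A) (snd A)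
      in - fls_residue (fls_X_intpow (-4) * inverse (yz p2 p3 p4 p5) * trace (L ** L)))"

definition Hr :: "(nat \<Rightarrow> complex) \<Rightarrow> (nat \<Rightarrow> complex) \<Rightarrow> complex" where
  "Hr a k =
     2 * (k 1 - k 4) * (a 4 * k 1 - a 1 * k 4) / (a 1 - a 4)^2
   + 2 * (k 2 - k 3) * (a 3 * k 2 - a 2 * k 3) / (a 2 - a 3)^2"

definition adot :: "(nat \<Rightarrow> complex) \<Rightarrow> (nat \<Rightarrow> complex) \<Rightarrow> nat \<Rightarrow> complex" where
  "adot a k s =
     (if s = 1 then - 2 * (a 1 * k 4 + a 4 * (k 4 - 2 * k 1)) / (a 1 - a 4)^2
      else if s = 4 then - 2 * (a 4 * k 1 + a 1 * (k 1 - 2 * k 4)) / (a 1 - a 4)^2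
      else if s = 2 then - 2 * (a 2 * k 3 + a 3 * (k 3 - 2 * k 2)) / (a 2 - a 3)^2
      else - 2 * (a 3 * k 2 + a 2 * (k 2 - 2 * k 3)) / (a 2 - a 3)^2)"

definition kdot :: "(nat \<Rightarrow> complex) \<Rightarrow> (nat \<Rightarrow> complex) \<Rightarrow> nat \<Rightarrow> complex" where
  "kdot a k s =
     (if s = 1 \<or> s = 4 then (k 1 - k 4) / (a 1 - a 4) * adot a k s
      else (k 2 - k 3) / (a 2 - a 3) * adot a k s)"

end

theory Submission
  imports Defs
begin


definition Qp :: "complex \<Rightarrow> complex \<Rightarrow> complex \<Rightarrow> complex \<Rightarrow> complex fps" where
  "Qp p2 p3 p4 p5 = 1 + fps_const p2 * fps_X ^ 4 + fps_const p3 * fps_X ^ 6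
          + fps_const p4 * fps_X ^ 8 + fps_const p5 * fps_X ^ 10"
definition Rp where "Rp p2 p3 p4 p5 = fps_radical (\<lambda>_ _. 1) 2 (Qp p2 p3 p4 p5)"

lemma Qp0: "Qp p2 p3 p4 p5 $ 0 = 1" by (simp add: Qp_def)
lemma Qp1: "Qp p2 p3 p4 p5 $ 1 = 0" by (simp add: Qp_def)
lemma Qp2: "Qp p2 p3 p4 p5 $ 2 = 0" by (simp add: Qp_def)

lemma Rp0: "Rp p2 p3 p4 p5 $ 0 = 1" by (simp add: Rp_def Qp0)
lemma Rp_sq: "Rp p2 p3 p4 p5 ^ 2 = Qp p2 p3 p4 p5"
proof -
  have "(fps_radical (\<lambda>_ _. 1) (Suc 1) (Qp p2 p3 p4 p5)) ^ (Suc 1) = Qp p2 p3 p4 p5"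
    using power_radical[of "Qp p2 p3 p4 p5" "\<lambda>_ _. 1" 1] by (simp add: Qp0)
  thus ?thesis by (simp add: Rp_def numeral_2_eq_2)
qed
lemma Rp1: "Rp p2 p3 p4 p5 $ 1 = 0"
proof -
  have "(Rp p2 p3 p4 p5 ^ 2) $ 1 = 0" by (simp only: Rp_sq Qp1)
  thus ?thesis by (simp add: power2_eq_square fps_mult_nth_1 Rp0)
qed
lemma Rp1': "Rp p2 p3 p4 p5 $ Suc 0 = 0" using Rp1 by simp
lemma Rp2: "Rp p2 p3 p4 p5 $ 2 = 0"
proof -
  have "(Rp p2 p3 p4 p5 ^ 2) $ 2 = 0" by (simp only: Rp_sq Qp2)
  thus ?thesis by (simp add: power2_eq_square fps_mult_nth Rp0 Rp1 numeral_2_eq_2 Rp1')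
qed

definition Iv where "Iv p2 p3 p4 p5 = inverse (Rp p2 p3 p4 p5)"
lemma Iv_mult: "Rp p2 p3 p4 p5 * Iv p2 p3 p4 p5 = 1"
  by (simp add: Iv_def Rp0 inverse_mult_eq_1')
lemma Iv1_aux: "Rp p2 p3 p4 p5 $ 2 = 0" by (rule Rp2)
lemma Iv0: "Iv p2 p3 p4 p5 $ 0 = 1"
  using arg_cong[OF Iv_mult[of p2 p3 p4 p5], of "\<lambda>f::complex fps. f $ 0"] by (simp add: Rp0)
lemma Iv1: "Iv p2 p3 p4 p5 $ 1 = 0"
  using arg_cong[OF Iv_mult[of p2 p3 p4 p5], of "\<lambda>f::complex fps. f $ 1"] by (simp add: Rp0 Rp1' Iv0)
lemma Iv2: "Iv p2 p3 p4 p5 $ 2 = 0"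
  using arg_cong[OF Iv_mult[of p2 p3 p4 p5], of "\<lambda>f::complex fps. f $ 2"] by (simp add: Rp0 Rp1' Rp2[simplified numeral_2_eq_2] Iv1[simplified] Iv0 fps_mult_nth numeral_2_eq_2)

lemma yz_eq: "yz p2 p3 p4 p5 = fls_shift 5 (fps_to_fls (Rp p2 p3 p4 p5))"
  by (simp add: yz_def Rp_def Qp_def fls_shifted_times_simps)

lemma yz_nz: "yz p2 p3 p4 p5 \<noteq> 0"
proof
  assume "yz p2 p3 p4 p5 = 0"
  hence "fls_nth (yz p2 p3 p4 p5) (-5) = 0" by simp
  thus False by (simp add: yz_eq Rp0)
qed

definition Wf where "Wf p2 p3 p4 p5 = fls_X_intpow (-4) * inverse (yz p2 p3 p4 p5)"

lemma Wf_eq: "Wf p2 p3 p4 p5 = fls_shift (-1) (fps_to_fls (Iv p2 p3 p4 p5))"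
  by (simp add: Wf_def yz_eq fls_inverse_shift fls_inverse_fps_to_fls Rp0 Iv_def
        fls_X_intpow_times_conv_shift fls_shifted_times_simps)

lemma Wf_yz: "Wf p2 p3 p4 p5 * yz p2 p3 p4 p5 = fls_X_intpow (-4)"
  using yz_nz by (simp add: Wf_def)




lemma xz_eq: "xz = fls_shift 2 1" by (simp add: xz_def)

lemma RPP: "fls_residue (Wf p2 p3 p4 p5 * ((fls_const u0 + fls_const u1 * xz) * (fls_const w0 + fls_const w1 * xz)))
   = u0 * w1 + u1 * w0"
proof -
  have e: "(fls_const u0 + fls_const u1 * xz) * (fls_const w0 + fls_const w1 * xz)
     = fls_const (u0 * w0) + fls_const (u0 * w1 + u1 * w0) * fls_shift 2 1 + fls_const (u1 * w1) * fls_shift 4 1"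
    by (simp add: xz_eq algebra_simps fls_shifted_times_simps flip: fls_const_mult_const fls_plus_const)
  show ?thesis unfolding e
    by (simp add: Wf_eq distrib_left fls_shifted_times_simps Iv0 Iv2 mult.left_commute[of _ "fls_const _"])
qed

definition Hg :: "complex \<Rightarrow> complex fps" where "Hg a = inverse (1 - fps_const a * fps_X ^ 2)"

lemma xza: "xz - fls_const a = fls_shift 2 (fps_to_fls (1 - fps_const a * fps_X ^ 2))"
  by (rule fls_eqI) (auto simp: xz_eq)

lemma Ginv: "inverse (xz - fls_const a) = fls_shift (-2) (fps_to_fls (Hg a))"
  unfolding xza fls_inverse_shift Hg_def by (subst fls_inverse_fps_to_fls) simp_all

lemma Hg1: "Hg a $ 1 = 0"
proof -
  have "(1 - fps_const a * fps_X ^ 2) * Hg a = 1" unfolding Hg_def by (rule inverse_mult_eq_1') simp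
  from arg_cong[OF this, of "\<lambda>f::complex fps. f $ 1"] have "Hg a $ Suc 0 = 0"
    by (simp add: fps_mult_nth_1')
  thus ?thesis by simp
qed

lemma xz_nz: "xz - fls_const a \<noteq> 0"
proof
  assume "xz - fls_const a = 0"
  hence "fls_nth (xz - fls_const a) (-2) = 0" by simp
  thus False by (simp add: xz_eq)
qed

lemma RPS: "fls_residue (Wf p2 p3 p4 p5 * ((fls_const u0 + fls_const u1 * xz) *
     (fls_const k * ((yz p2 p3 p4 p5 + fls_const b) / (xz - fls_const a))))) = 0"
proof -
  define G where "G = inverse (xz - fls_const a)"
  define w where "w = u0 + u1 * a"
  have xG: "xz * G = 1 + fls_const a * G"
  proof -
    have "(xz - fls_const a) * G = 1" unfolding G_def using xz_nz by simp
    thus ?thesis by (simp add: algebra_simps)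
  qed
  have dG: "(fls_const u0 + fls_const u1 * xz) * G = fls_const u1 + fls_const w * G"
  proof -
    have fw: "fls_const w = fls_const u0 + fls_const u1 * fls_const a" by (simp add: w_def fls_plus_const)
    have "(fls_const u0 + fls_const u1 * xz) * G = fls_const u0 * G + fls_const u1 * (xz * G)"
      by (simp add: algebra_simps)
    also have "\<dots> = fls_const u1 + fls_const w * G" unfolding xG fw by (simp add: algebra_simps del: fls_const_mult_const)
    finally show ?thesis .
  qed
  have WY: "Wf p2 p3 p4 p5 * yz p2 p3 p4 p5 = fls_shift 4 1" by (simp add: Wf_yz)
  have "Wf p2 p3 p4 p5 * ((fls_const u0 + fls_const u1 * xz) *
     (fls_const k * ((yz p2 p3 p4 p5 + fls_const b) / (xz - fls_const a))))
    = fls_const k * ((Wf p2 p3 p4 p5 * yz p2 p3 p4 p5 + fls_const b * Wf p2 p3 p4 p5) *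
        ((fls_const u0 + fls_const u1 * xz) * G))"
    unfolding G_def divide_inverse by (simp add: algebra_simps)
  also have "\<dots> = fls_const k * (fls_shift 4 1 * fls_const u1 + fls_const w * (fls_shift 4 1 * G)
       + fls_const b * (Wf p2 p3 p4 p5 * fls_const u1) + fls_const b * (fls_const w * (Wf p2 p3 p4 p5 * G)))"
    unfolding dG WY by (simp add: algebra_simps del: fls_const_mult_const)
  finally have e: "Wf p2 p3 p4 p5 * ((fls_const u0 + fls_const u1 * xz) *
     (fls_const k * ((yz p2 p3 p4 p5 + fls_const b) / (xz - fls_const a)))) = 
     fls_const k * (fls_shift 4 1 * fls_const u1 + fls_const w * (fls_shift 4 1 * G)
       + fls_const b * (Wf p2 p3 p4 p5 * fls_const u1) + fls_const b * (fls_const w * (Wf p2 p3 p4 p5 * G)))" .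
  have r2: "fls_nth (fls_shift 4 1 * G) (-1) = 0"
    using Hg1[of a] by (simp add: G_def Ginv fls_shifted_times_simps)
  have r3: "fls_nth (Wf p2 p3 p4 p5) (-1) = 0"
    by (simp add: Wf_eq)
  have r4: "fls_nth (Wf p2 p3 p4 p5 * G) (-1) = 0"
    by (simp add: Wf_eq G_def Ginv fls_shifted_times_simps flip: fls_times_fps_to_fls)
  show ?thesis unfolding e using r2 r3 r4 by (simp del: fls_const_mult_const)
qed




no_notation fps_nth (infixl "$" 75)


lemma res_add: "fls_residue (W * (f + g)) = fls_residue (W * f) + fls_residue (W * (g :: complex fls))"
  by (simp add: distrib_left)

lemma res_const: "fls_residue (W * (fls_const c * f)) = c * fls_residue (W * (f :: complex fls))"
  by (simp add: mult.left_commute[of W])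

lemma RE: "fls_residue (Wf p2 p3 p4 p5 * ((fls_const a0 + fls_const a1 * xz + fls_const k * S) *
             (fls_const c0 + fls_const c1 * xz + fls_const m * S)))
   = a0 * c1 + a1 * c0 + k * m * fls_residue (Wf p2 p3 p4 p5 * (S * S))"
  if S: "S = (yz p2 p3 p4 p5 + fls_const b) / (xz - fls_const a)"
proof -
  have e: "(fls_const a0 + fls_const a1 * xz + fls_const k * S) * (fls_const c0 + fls_const c1 * xz + fls_const m * S)
     = (fls_const a0 + fls_const a1 * xz) * (fls_const c0 + fls_const c1 * xz)
       + (fls_const a0 + fls_const a1 * xz) * (fls_const m * S)
       + (fls_const c0 + fls_const c1 * xz) * (fls_const k * S)
       + fls_const k * (fls_const m * (S * S))"
    by (simp add: algebra_simps del: fls_const_mult_const)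
  show ?thesis unfolding e res_add res_const RPP
    apply (simp only: S RPS)
    by simp
qed

lemma Ham_formula:
  assumes sol: "lax_solution st = (A0, A1)"
    and lx: "laxz p2 p3 p4 p5 st A0 A1 = (\<chi> i j. fls_const (A0$i$j) + fls_const (A1$i$j) * xz + fls_const (K$i$j) * S)"
    and S: "S = (yz p2 p3 p4 p5 + fls_const b) / (xz - fls_const a)"
  shows "Ham p2 p3 p4 p5 st = - 2 * (A0$1$1 * A1$1$1 + A0$2$2 * A1$2$2 + A0$1$2 * A1$2$1 + A0$2$1 * A1$1$2)
     - (K$1$1 * K$1$1 + K$2$2 * K$2$2 + 2 * K$1$2 * K$2$1) * fls_residue (Wf p2 p3 p4 p5 * (S * S))"
proof -
  define L where "L = laxz p2 p3 p4 p5 st A0 A1"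
  have tr: "trace (L ** L) = L$1$1 * L$1$1 + L$1$2 * L$2$1 + (L$2$1 * L$1$2 + L$2$2 * L$2$2)"
    by (simp add: trace_def matrix_matrix_mult_def sum_2)
  have "Ham p2 p3 p4 p5 st = - fls_residue (Wf p2 p3 p4 p5 * trace (L ** L))"
    by (simp add: Ham_def sol L_def Wf_def Let_def)
  also have "\<dots> = - 2 * (A0$1$1 * A1$1$1 + A0$2$2 * A1$2$2 + A0$1$2 * A1$2$1 + A0$2$1 * A1$1$2)
     - (K$1$1 * K$1$1 + K$2$2 * K$2$2 + 2 * K$1$2 * K$2$1) * fls_residue (Wf p2 p3 p4 p5 * (S * S))"
    unfolding tr res_add unfolding L_def lx vec_lambda_beta RE[OF S] by (simp add: algebra_simps)
  finally show ?thesis .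
qed

lemma sum14: "(\<Sum>s\<in>{1..4::nat}. f s) = f 1 + f 2 + f 3 + f 4"
proof -
  have "{1..4::nat} = {1,2,3,4}" by auto
  thus ?thesis by (simp add: add.assoc)
qed

definition Sf where "Sf p2 p3 p4 p5 st s = (yz p2 p3 p4 p5 + fls_const (pb st s)) / (xz - fls_const (pa st s))"

lemma laxz_collapse:
  assumes s0: "s0 \<in> {1..4}" and z: "\<forall>s\<in>{1..4}. s \<noteq> s0 \<longrightarrow> betaV st s = 0"
  shows "laxz p2 p3 p4 p5 st A0 A1 = (\<chi> i j. fls_const (A0$i$j) + fls_const (A1$i$j) * xz
     + fls_const (outer (alphaV st s0) (betaV st s0) $i$j) * Sf p2 p3 p4 p5 st s0)"
proof -
  have "\<And>i j. (\<Sum>s\<in>{1..4}. fls_const (alphaV st s $ i * betaV st s $ j) *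
            ((yz p2 p3 p4 p5 + fls_const (pb st s)) / (xz - fls_const (pa st s))))
     = fls_const (outer (alphaV st s0) (betaV st s0) $i$j) * Sf p2 p3 p4 p5 st s0"
  proof -
    fix i j
    have "(\<Sum>s\<in>{1..4}. fls_const (alphaV st s $ i * betaV st s $ j) *
            ((yz p2 p3 p4 p5 + fls_const (pb st s)) / (xz - fls_const (pa st s))))
       = fls_const (alphaV st s0 $ i * betaV st s0 $ j) *
            ((yz p2 p3 p4 p5 + fls_const (pb st s0)) / (xz - fls_const (pa st s0)))
         + (\<Sum>s\<in>{1..4} - {s0}. fls_const (alphaV st s $ i * betaV st s $ j) *
            ((yz p2 p3 p4 p5 + fls_const (pb st s)) / (xz - fls_const (pa st s))))"
      using s0 by (simp add: sum.remove)
    also have "(\<Sum>s\<in>{1..4} - {s0}. fls_const (alphaV st s $ i * betaV st s $ j) *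
            ((yz p2 p3 p4 p5 + fls_const (pb st s)) / (xz - fls_const (pa st s)))) = 0"
      using z by (intro sum.neutral) auto
    finally show "?thesis i j" by (simp add: outer_def Sf_def)
  qed
  thus ?thesis unfolding laxz_def by simp
qed



no_notation fps_nth (infixl "$" 75)

lemma lax_at_entry:
  assumes s: "s \<in> {1..4}"
  shows "lax_at st A0 A1 s $i$j = A0$i$j + pa st s * A1$i$j +
    (\<Sum>t\<in>{1..4}. (pb st s + pb st t) / (pa st s - pa st t) * (alphaV st t $ i * betaV st t $ j))"
proof -
  have "(\<Sum>t\<in>{1..4}. (pb st s + pb st t) / (pa st s - pa st t) * (alphaV st t $ i * betaV st t $ j))
     = (pb st s + pb st s) / (pa st s - pa st s) * (alphaV st s $ i * betaV st s $ j) +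
       (\<Sum>t\<in>{1..4} - {s}. (pb st s + pb st t) / (pa st s - pa st t) * (alphaV st t $ i * betaV st t $ j))"
    using s by (simp add: sum.remove)
  thus ?thesis unfolding lax_at_def by (simp add: sum_component smat_def outer_def)
qed

lemma lax_at_entry4:
  assumes s: "s \<in> {1..4}"
  shows "lax_at st A0 A1 s $i$j = A0$i$j + pa st s * A1$i$j +
    (pb st s + pb st 1) / (pa st s - pa st 1) * (alphaV st 1 $ i * betaV st 1 $ j) +
    (pb st s + pb st 2) / (pa st s - pa st 2) * (alphaV st 2 $ i * betaV st 2 $ j) +
    (pb st s + pb st 3) / (pa st s - pa st 3) * (alphaV st 3 $ i * betaV st 3 $ j) +
    (pb st s + pb st 4) / (pa st s - pa st 4) * (alphaV st 4 $ i * betaV st 4 $ j)"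
  unfolding lax_at_entry[OF s] sum14 by (simp add: add.assoc)

lemma alphaV_simps: "alphaV st 1 = vector [al11 st, al21 st]" "alphaV st 2 = vector [al12 st, al22 st]"
  "alphaV st 3 = vector [1, 0]" "alphaV st 4 = vector [0, 1]"
  by (simp_all add: alphaV_def)
lemma alphaV_simps': "alphaV st (Suc 0) = vector [al11 st, al21 st]" by (simp add: alphaV_def)
lemma betaV_simps: "betaV st 1 = vector [be11 st, be21 st]" "betaV st 2 = vector [be12 st, be22 st]"
  "betaV st 3 = vector [0, be23 st]" "betaV st 4 = vector [be14 st, 0]"
  by (simp_all add: betaV_def)
lemma betaV_simps': "betaV st (Suc 0) = vector [be11 st, be21 st]" by (simp add: betaV_def)

lemma lax_eqs_iff: "lax_eqs st A0 A1 \<longleftrightarrow>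
  (\<forall>s\<in>{1,2,3,4}. \<forall>i. (\<Sum>j\<in>UNIV. lax_at st A0 A1 s $ i $ j * alphaV st s $ j) = kap st s * alphaV st s $ i)"
proof -
  have "{1..4::nat} = {1,2,3,4}" by auto
  thus ?thesis unfolding lax_eqs_def by (simp add: vec_eq_iff matrix_vector_mult_def)
qed


definition ip1 :: "complex \<Rightarrow> complex \<Rightarrow> complex \<Rightarrow> complex \<Rightarrow> complex" where "ip1 p q P Q = (P - Q) / (p - q)"
definition ip0 :: "complex \<Rightarrow> complex \<Rightarrow> complex \<Rightarrow> complex \<Rightarrow> complex" where "ip0 p q P Q = (p * Q - q * P) / (p - q)"

lemma ip_eval: assumes "p \<noteq> q" shows "ip0 p q P Q + p * ip1 p q P Q = P" "ip0 p q P Q + q * ip1 p q P Q = Q"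
proof -
  have pq: "p - q \<noteq> 0" using assms by simp
  have "ip0 p q P Q + p * ip1 p q P Q = (p * Q - q * P + p * (P - Q)) / (p - q)"
    unfolding ip0_def ip1_def by (simp add: add_divide_distrib)
  also have "p * Q - q * P + p * (P - Q) = P * (p - q)" by (simp add: algebra_simps)
  finally show "ip0 p q P Q + p * ip1 p q P Q = P" using pq by simp
  have "ip0 p q P Q + q * ip1 p q P Q = (p * Q - q * P + q * (P - Q)) / (p - q)"
    unfolding ip0_def ip1_def by (simp add: add_divide_distrib)
  also have "p * Q - q * P + q * (P - Q) = Q * (p - q)" by (simp add: algebra_simps)
  finally show "ip0 p q P Q + q * ip1 p q P Q = Q" using pq by simp
qed

lemma lin2: "p \<noteq> q \<Longrightarrow> (x0 + p * x1 = P \<and> x0 + q * x1 = Q) \<longleftrightarrow> (x1 = ip1 p q P Q \<and> x0 = ip0 p q P Q)"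
proof
  assume pq: "p \<noteq> q" and h: "x0 + p * x1 = P \<and> x0 + q * x1 = Q"
  hence pq': "p - q \<noteq> 0" by simp
  have "P - Q = (x0 + p * x1) - (x0 + q * x1)" using h by simp
  also have "\<dots> = (p - q) * x1" by (simp add: algebra_simps)
  finally have "P - Q = (p - q) * x1" .
  hence x1: "x1 = ip1 p q P Q" using pq' by (simp add: ip1_def field_simps)
  have "x0 = P - p * x1" using h by (simp add: algebra_simps)
  thus "x1 = ip1 p q P Q \<and> x0 = ip0 p q P Q" using x1 pq' by (simp add: ip1_def ip0_def field_simps)
next
  assume pq: "p \<noteq> q" and h: "x1 = ip1 p q P Q \<and> x0 = ip0 p q P Q"
  hence pq': "p - q \<noteq> 0" by simp
  from h have x1: "x1 = ip1 p q P Q" and x0: "x0 = ip0 p q P Q" by auto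
  show "x0 + p * x1 = P \<and> x0 + q * x1 = Q" unfolding x1 x0 using ip_eval pq by simp
qed

lemma lin2J: "p \<noteq> q \<Longrightarrow> (x0 + p * x1 + J = P \<and> x0 + q * x1 + K = Q) \<longleftrightarrow> (x1 = ip1 p q (P - J) (Q - K) \<and> x0 = ip0 p q (P - J) (Q - K))"
  using lin2[of p q x0 x1 "P - J" "Q - K"] by (simp add: eq_diff_eq)

lemma lin2J2: "p \<noteq> q \<Longrightarrow> (x0 + p * x1 = P \<and> x0 + q * x1 + K = Q) \<longleftrightarrow> (x1 = ip1 p q P (Q - K) \<and> x0 = ip0 p q P (Q - K))"
  using lin2[of p q x0 x1 "P" "Q - K"] by (simp add: eq_diff_eq)

definition mat2 :: "complex \<Rightarrow> complex \<Rightarrow> complex \<Rightarrow> complex \<Rightarrow> complex^2^2" where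
  "mat2 a b c d = vector [vector [a, b], vector [c, d]]"

lemma mat2_nth [simp]: "mat2 a b c d $ 1 $ 1 = a" "mat2 a b c d $ 1 $ 2 = b"
  "mat2 a b c d $ 2 $ 1 = c" "mat2 a b c d $ 2 $ 2 = d"
  by (simp_all add: mat2_def)

lemma mat2_eq: "(A = mat2 a b c d) \<longleftrightarrow> (A$1$1 = a \<and> A$1$2 = b \<and> A$2$1 = c \<and> A$2$2 = d)"
  by (auto simp: vec_eq_iff forall_2)

lemma ip_00 [simp]: "ip0 p q 0 0 = 0" "ip1 p q 0 0 = 0" by (simp_all add: ip0_def ip1_def)

lemma ip_term: "- 2 * (ip0 p q P Q * ip1 p q P Q) = 2 * (P - Q) * (q * P - p * Q) / (p - q) ^ 2"
proof -
  have "- 2 * (ip0 p q P Q * ip1 p q P Q) = (- 2 * ((p * Q - q * P) * (P - Q))) / ((p - q) * (p - q))"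
    unfolding ip0_def ip1_def by (simp add: times_divide_times_eq)
  also have "- 2 * ((p * Q - q * P) * (P - Q)) = 2 * (P - Q) * (q * P - p * Q)" by (simp add: algebra_simps)
  finally show ?thesis by (simp add: power2_eq_square)
qed

lemma Hr_ip:
  shows "Hr a k = - 2 * (ip0 (a 1) (a 4) (k 1) (k 4) * ip1 (a 1) (a 4) (k 1) (k 4))
     + - 2 * (ip0 (a 2) (a 3) (k 2) (k 3) * ip1 (a 2) (a 3) (k 2) (k 3))"
  unfolding ip_term Hr_def by (simp add: mult.assoc)

lemma vec00: "vector [0, 0] = (0 :: complex^2)" by (simp add: vec_eq_iff forall_2)

locale M1loc =
  fixes st :: phase
  assumes d14: "pa st 1 \<noteq> pa st 4" and d23: "pa st 2 \<noteq> pa st 3"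
    and z: "al11 st = 0" "al22 st = 0" "be12 st = 0" "be22 st = 0" "be23 st = 0" "be14 st = 0"
    and nz: "al12 st \<noteq> 0" "al21 st \<noteq> 0"
begin

definition "J21 = (pb st 2 + pb st (Suc 0)) * (al21 st * be11 st) / (pa st 2 - pa st (Suc 0))"
definition "K21 = (pb st 3 + pb st (Suc 0)) * (al21 st * be11 st) / (pa st 3 - pa st (Suc 0))"
definition "K22 = (pb st 4 + pb st (Suc 0)) * (al21 st * be21 st) / (pa st 4 - pa st (Suc 0))"

definition "MM0 = mat2 (ip0 (pa st 2) (pa st 3) (kap st 2) (kap st 3)) 0
   (ip0 (pa st 2) (pa st 3) (0 - J21) (0 - K21)) (ip0 (pa st (Suc 0)) (pa st 4) (kap st (Suc 0)) (kap st 4 - K22))"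
definition "MM1 = mat2 (ip1 (pa st 2) (pa st 3) (kap st 2) (kap st 3)) 0
   (ip1 (pa st 2) (pa st 3) (0 - J21) (0 - K21)) (ip1 (pa st (Suc 0)) (pa st 4) (kap st (Suc 0)) (kap st 4 - K22))"

lemma eqs: "lax_eqs st A0 A1 \<longleftrightarrow> A0 = MM0 \<and> A1 = MM1"
proof -
  have d14': "pa st (Suc 0) \<noteq> pa st 4" using d14 by simp
  have e: "lax_eqs st A0 A1 \<longleftrightarrow> (A0 $ 1 $ 2 + pa st (Suc 0) * A1 $ 1 $ 2 = 0 \<and>
      A0 $ 2 $ 2 + pa st (Suc 0) * A1 $ 2 $ 2 = kap st (Suc 0) \<and>
      A0 $ 1 $ 1 + pa st 2 * A1 $ 1 $ 1 = kap st 2 \<and>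
      A0 $ 2 $ 1 + pa st 2 * A1 $ 2 $ 1 + J21 = 0 \<and>
      A0 $ 1 $ 1 + pa st 3 * A1 $ 1 $ 1 = kap st 3 \<and>
      A0 $ 2 $ 1 + pa st 3 * A1 $ 2 $ 1 + K21 = 0 \<and>
      A0 $ 1 $ 2 + pa st 4 * A1 $ 1 $ 2 = 0 \<and>
      A0 $ 2 $ 2 + pa st 4 * A1 $ 2 $ 2 + K22 = kap st 4)"
    unfolding lax_eqs_iff J21_def K21_def K22_def
    by (simp add: lax_at_entry4 alphaV_simps betaV_simps alphaV_simps' betaV_simps' forall_2 sum_2 z nz)
  show ?thesis unfolding e MM0_def MM1_def mat2_eq
    using lin2[OF d23, of "A0$1$1" "A1$1$1" "kap st 2" "kap st 3"]
      lin2J[OF d23, of "A0$2$1" "A1$2$1" J21 0 K21 0]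
      lin2[OF d14', of "A0$1$2" "A1$1$2" 0 0]
      lin2J2[OF d14', of "A0$2$2" "A1$2$2" "kap st (Suc 0)" K22 "kap st 4"]
    by auto
qed

lemma sol: "lax_solution st = (MM0, MM1)"
  unfolding lax_solution_def using eqs by (intro the_equality) auto

lemma ham: "Ham p2 p3 p4 p5 st = Hr (pa st) ((kap st)(4 := kap st 4 - K22))
   - (al21 st * be21 st) ^ 2 * fls_residue (Wf p2 p3 p4 p5 * (Sf p2 p3 p4 p5 st 1 * Sf p2 p3 p4 p5 st 1))"
proof -
  have bz: "\<forall>s\<in>{1..4}. s \<noteq> 1 \<longrightarrow> betaV st s = 0"
  proof (intro ballI impI)
    fix s :: nat assume "s \<in> {1..4}" "s \<noteq> 1"
    hence "s = 2 \<or> s = 3 \<or> s = 4" by auto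
    thus "betaV st s = 0" using z by (auto simp: betaV_simps betaV_simps' vec00)
  qed
  have s1: "(1::nat) \<in> {1..4}" by simp
  note H = Ham_formula[OF sol laxz_collapse[OF s1 bz] Sf_def]
  show ?thesis unfolding H
    by (simp add: Hr_ip d14 d23 MM0_def MM1_def outer_def alphaV_simps betaV_simps alphaV_simps' betaV_simps' z power2_eq_square)
qed

end

locale M2loc =
  fixes st :: phase
  assumes d14: "pa st 1 \<noteq> pa st 4" and d23: "pa st 2 \<noteq> pa st 3"
    and z: "al11 st = 0" "al22 st = 0" "be11 st = 0" "be21 st = 0" "be23 st = 0" "be14 st = 0"
    and nz: "al12 st \<noteq> 0" "al21 st \<noteq> 0"
begin

definition "J12 = (pb st (Suc 0) + pb st 2) * (al12 st * be22 st) / (pa st (Suc 0) - pa st 2)"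
definition "K12 = (pb st 4 + pb st 2) * (al12 st * be22 st) / (pa st 4 - pa st 2)"
definition "K11 = (pb st 3 + pb st 2) * (al12 st * be12 st) / (pa st 3 - pa st 2)"

definition "MM0 = mat2 (ip0 (pa st 2) (pa st 3) (kap st 2) (kap st 3 - K11)) (ip0 (pa st (Suc 0)) (pa st 4) (0 - J12) (0 - K12))
   0 (ip0 (pa st (Suc 0)) (pa st 4) (kap st (Suc 0)) (kap st 4))"
definition "MM1 = mat2 (ip1 (pa st 2) (pa st 3) (kap st 2) (kap st 3 - K11)) (ip1 (pa st (Suc 0)) (pa st 4) (0 - J12) (0 - K12))
   0 (ip1 (pa st (Suc 0)) (pa st 4) (kap st (Suc 0)) (kap st 4))"

lemma eqs: "lax_eqs st A0 A1 \<longleftrightarrow> A0 = MM0 \<and> A1 = MM1"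
proof -
  have d14': "pa st (Suc 0) \<noteq> pa st 4" using d14 by simp
  have e: "lax_eqs st A0 A1 \<longleftrightarrow> (A0 $ 1 $ 2 + pa st (Suc 0) * A1 $ 1 $ 2 + J12 = 0 \<and>
      A0 $ 2 $ 2 + pa st (Suc 0) * A1 $ 2 $ 2 = kap st (Suc 0) \<and>
      A0 $ 1 $ 1 + pa st 2 * A1 $ 1 $ 1 = kap st 2 \<and>
      A0 $ 2 $ 1 + pa st 2 * A1 $ 2 $ 1 = 0 \<and>
      A0 $ 1 $ 1 + pa st 3 * A1 $ 1 $ 1 + K11 = kap st 3 \<and>
      A0 $ 2 $ 1 + pa st 3 * A1 $ 2 $ 1 = 0 \<and>
      A0 $ 1 $ 2 + pa st 4 * A1 $ 1 $ 2 + K12 = 0 \<and>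
      A0 $ 2 $ 2 + pa st 4 * A1 $ 2 $ 2 = kap st 4)"
    unfolding lax_eqs_iff J12_def K12_def K11_def
    by (simp add: lax_at_entry4 alphaV_simps betaV_simps alphaV_simps' betaV_simps' forall_2 sum_2 z nz)
  show ?thesis unfolding e MM0_def MM1_def mat2_eq
    using lin2J2[OF d23, of "A0$1$1" "A1$1$1" "kap st 2" K11 "kap st 3"]
      lin2[OF d23, of "A0$2$1" "A1$2$1" 0 0]
      lin2J[OF d14', of "A0$1$2" "A1$1$2" J12 0 K12 0]
      lin2[OF d14', of "A0$2$2" "A1$2$2" "kap st (Suc 0)" "kap st 4"]
    by auto
qed

lemma sol: "lax_solution st = (MM0, MM1)"
  unfolding lax_solution_def using eqs by (intro the_equality) auto

lemma ham: "Ham p2 p3 p4 p5 st = Hr (pa st) ((kap st)(3 := kap st 3 - K11))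
   - (al12 st * be12 st) ^ 2 * fls_residue (Wf p2 p3 p4 p5 * (Sf p2 p3 p4 p5 st 2 * Sf p2 p3 p4 p5 st 2))"
proof -
  have bz: "\<forall>s\<in>{1..4}. s \<noteq> 2 \<longrightarrow> betaV st s = 0"
  proof (intro ballI impI)
    fix s :: nat assume "s \<in> {1..4}" "s \<noteq> 2"
    hence "s = 1 \<or> s = 3 \<or> s = 4" by auto
    thus "betaV st s = 0" using z by (auto simp: betaV_simps betaV_simps' vec00)
  qed
  have s1: "(2::nat) \<in> {1..4}" by simp
  note H = Ham_formula[OF sol laxz_collapse[OF s1 bz] Sf_def]
  show ?thesis unfolding H
    by (simp add: Hr_ip d14 d23 MM0_def MM1_def outer_def alphaV_simps betaV_simps alphaV_simps' betaV_simps' z power2_eq_square)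
qed

end


no_notation fps_nth (infixl "$" 75)

lemma F5_alg:
  fixes x11 x12 x21 x22 y11 y12 y21 y22 a1 a2 a3 a4 k1 k2 k3 k4 u al :: complex
  assumes d23: "a2 \<noteq> a3" and d14: "a1 \<noteq> a4" and al: "al \<noteq> 0"
  defines "W \<equiv> u * (k1 - (ip0 a2 a3 k2 k3 + a1 * ip1 a2 a3 k2 k3)) / al"
  shows "((x11 + a1 * y11) * u + (x12 + a1 * y12) * al = k1 * u \<and>
      (x21 + a1 * y21) * u + (x22 + a1 * y22) * al = k1 * al \<and>
      x11 + a2 * y11 = k2 \<and> x21 + a2 * y21 = 0 \<and>
      x11 + a3 * y11 = k3 \<and> x21 + a3 * y21 = 0 \<and>
      x12 + a4 * y12 = 0 \<and> x22 + a4 * y22 = k4)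
   \<longleftrightarrow> (x11 = ip0 a2 a3 k2 k3 \<and> x12 = ip0 a1 a4 W 0 \<and> x21 = 0 \<and> x22 = ip0 a1 a4 k1 k4 \<and>
        y11 = ip1 a2 a3 k2 k3 \<and> y12 = ip1 a1 a4 W 0 \<and> y21 = 0 \<and> y22 = ip1 a1 a4 k1 k4)"
proof
  assume h: "((x11 + a1 * y11) * u + (x12 + a1 * y12) * al = k1 * u \<and>
      (x21 + a1 * y21) * u + (x22 + a1 * y22) * al = k1 * al \<and>
      x11 + a2 * y11 = k2 \<and> x21 + a2 * y21 = 0 \<and>
      x11 + a3 * y11 = k3 \<and> x21 + a3 * y21 = 0 \<and>
      x12 + a4 * y12 = 0 \<and> x22 + a4 * y22 = k4)"
  have c1: "y11 = ip1 a2 a3 k2 k3 \<and> x11 = ip0 a2 a3 k2 k3" using h lin2[OF d23, of x11 y11 k2 k3] by auto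
  have c2: "y21 = 0 \<and> x21 = 0" using h lin2[OF d23, of x21 y21 0 0] by auto
  have r2: "x22 + a1 * y22 = k1" using h c2 al by simp
  have "(x12 + a1 * y12) * al = u * (k1 - (x11 + a1 * y11))" using h by (simp add: algebra_simps)
  hence r1: "x12 + a1 * y12 = W" using c1 al unfolding W_def by (simp add: field_simps)
  have c3: "y12 = ip1 a1 a4 W 0 \<and> x12 = ip0 a1 a4 W 0" using h r1 lin2[OF d14, of x12 y12 W 0] by auto
  have c4: "y22 = ip1 a1 a4 k1 k4 \<and> x22 = ip0 a1 a4 k1 k4" using h r2 lin2[OF d14, of x22 y22 k1 k4] by auto
  show "x11 = ip0 a2 a3 k2 k3 \<and> x12 = ip0 a1 a4 W 0 \<and> x21 = 0 \<and> x22 = ip0 a1 a4 k1 k4 \<and>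
        y11 = ip1 a2 a3 k2 k3 \<and> y12 = ip1 a1 a4 W 0 \<and> y21 = 0 \<and> y22 = ip1 a1 a4 k1 k4"
    using c1 c2 c3 c4 by auto
next
  assume h: "x11 = ip0 a2 a3 k2 k3 \<and> x12 = ip0 a1 a4 W 0 \<and> x21 = 0 \<and> x22 = ip0 a1 a4 k1 k4 \<and>
        y11 = ip1 a2 a3 k2 k3 \<and> y12 = ip1 a1 a4 W 0 \<and> y21 = 0 \<and> y22 = ip1 a1 a4 k1 k4"
  have e1: "x12 + a1 * y12 = W" "x12 + a4 * y12 = 0" using h ip_eval[OF d14, of W 0] by auto
  have e2: "x22 + a1 * y22 = k1" "x22 + a4 * y22 = k4" using h ip_eval[OF d14, of k1 k4] by auto
  have e3: "x11 + a2 * y11 = k2" "x11 + a3 * y11 = k3" using h ip_eval[OF d23, of k2 k3] by auto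
  have e4: "(x11 + a1 * y11) * u + W * al = k1 * u" using h al unfolding W_def by (simp add: field_simps)
  show "((x11 + a1 * y11) * u + (x12 + a1 * y12) * al = k1 * u \<and>
      (x21 + a1 * y21) * u + (x22 + a1 * y22) * al = k1 * al \<and>
      x11 + a2 * y11 = k2 \<and> x21 + a2 * y21 = 0 \<and>
      x11 + a3 * y11 = k3 \<and> x21 + a3 * y21 = 0 \<and>
      x12 + a4 * y12 = 0 \<and> x22 + a4 * y22 = k4)"
    using e1 e2 e3 e4 h by simp
qed


lemma F6_alg:
  fixes x11 x12 x21 x22 y11 y12 y21 y22 a1 a2 a3 a4 k1 k2 k3 k4 v al :: complex
  assumes d23: "a2 \<noteq> a3" and d14: "a1 \<noteq> a4" and al: "al \<noteq> 0"
  defines "W \<equiv> v * (k2 - (ip0 a1 a4 k1 k4 + a2 * ip1 a1 a4 k1 k4)) / al"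
  shows "(x12 + a1 * y12 = 0 \<and> x22 + a1 * y22 = k1 \<and>
      (x11 + a2 * y11) * al + (x12 + a2 * y12) * v = k2 * al \<and>
      (x21 + a2 * y21) * al + (x22 + a2 * y22) * v = k2 * v \<and>
      x11 + a3 * y11 = k3 \<and> x21 + a3 * y21 = 0 \<and>
      x12 + a4 * y12 = 0 \<and> x22 + a4 * y22 = k4)
   \<longleftrightarrow> (x11 = ip0 a2 a3 k2 k3 \<and> x12 = 0 \<and> x21 = ip0 a2 a3 W 0 \<and> x22 = ip0 a1 a4 k1 k4 \<and>
        y11 = ip1 a2 a3 k2 k3 \<and> y12 = 0 \<and> y21 = ip1 a2 a3 W 0 \<and> y22 = ip1 a1 a4 k1 k4)"
proof
  assume h: "(x12 + a1 * y12 = 0 \<and> x22 + a1 * y22 = k1 \<and>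
      (x11 + a2 * y11) * al + (x12 + a2 * y12) * v = k2 * al \<and>
      (x21 + a2 * y21) * al + (x22 + a2 * y22) * v = k2 * v \<and>
      x11 + a3 * y11 = k3 \<and> x21 + a3 * y21 = 0 \<and>
      x12 + a4 * y12 = 0 \<and> x22 + a4 * y22 = k4)"
  have c2: "y12 = 0 \<and> x12 = 0" using h lin2[OF d14, of x12 y12 0 0] by auto
  have c4: "y22 = ip1 a1 a4 k1 k4 \<and> x22 = ip0 a1 a4 k1 k4" using h lin2[OF d14, of x22 y22 k1 k4] by auto
  have r: "x11 + a2 * y11 = k2" using h c2 al by simp
  have c1: "y11 = ip1 a2 a3 k2 k3 \<and> x11 = ip0 a2 a3 k2 k3" using h r lin2[OF d23, of x11 y11 k2 k3] by auto
  have "(x21 + a2 * y21) * al = v * (k2 - (x22 + a2 * y22))" using h by (simp add: algebra_simps)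
  hence r1: "x21 + a2 * y21 = W" using c4 al unfolding W_def by (simp add: field_simps)
  have c3: "y21 = ip1 a2 a3 W 0 \<and> x21 = ip0 a2 a3 W 0" using h r1 lin2[OF d23, of x21 y21 W 0] by auto
  show "x11 = ip0 a2 a3 k2 k3 \<and> x12 = 0 \<and> x21 = ip0 a2 a3 W 0 \<and> x22 = ip0 a1 a4 k1 k4 \<and>
        y11 = ip1 a2 a3 k2 k3 \<and> y12 = 0 \<and> y21 = ip1 a2 a3 W 0 \<and> y22 = ip1 a1 a4 k1 k4"
    using c1 c2 c3 c4 by auto
next
  assume h: "x11 = ip0 a2 a3 k2 k3 \<and> x12 = 0 \<and> x21 = ip0 a2 a3 W 0 \<and> x22 = ip0 a1 a4 k1 k4 \<and>
        y11 = ip1 a2 a3 k2 k3 \<and> y12 = 0 \<and> y21 = ip1 a2 a3 W 0 \<and> y22 = ip1 a1 a4 k1 k4"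
  have e1: "x21 + a2 * y21 = W" "x21 + a3 * y21 = 0" using h ip_eval[OF d23, of W 0] by auto
  have e2: "x22 + a1 * y22 = k1" "x22 + a4 * y22 = k4" using h ip_eval[OF d14, of k1 k4] by auto
  have e3: "x11 + a2 * y11 = k2" "x11 + a3 * y11 = k3" using h ip_eval[OF d23, of k2 k3] by auto
  have e4: "W * al + (x22 + a2 * y22) * v = k2 * v" using h al unfolding W_def by (simp add: field_simps)
  show "(x12 + a1 * y12 = 0 \<and> x22 + a1 * y22 = k1 \<and>
      (x11 + a2 * y11) * al + (x12 + a2 * y12) * v = k2 * al \<and>
      (x21 + a2 * y21) * al + (x22 + a2 * y22) * v = k2 * v \<and>
      x11 + a3 * y11 = k3 \<and> x21 + a3 * y21 = 0 \<and>
      x12 + a4 * y12 = 0 \<and> x22 + a4 * y22 = k4)"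
    using e1 e2 e3 e4 h by simp
qed

locale F5loc =
  fixes st :: phase
  assumes d14: "pa st 1 \<noteq> pa st 4" and d23: "pa st 2 \<noteq> pa st 3"
    and z: "al22 st = 0" "be11 st = 0" "be21 st = 0" "be12 st = 0" "be22 st = 0" "be23 st = 0" "be14 st = 0"
    and nz: "al12 st \<noteq> 0" "al21 st \<noteq> 0"
begin

definition "WW = al11 st * (kap st (Suc 0) - (ip0 (pa st 2) (pa st 3) (kap st 2) (kap st 3)
   + pa st (Suc 0) * ip1 (pa st 2) (pa st 3) (kap st 2) (kap st 3))) / al21 st"

definition "MM0 = mat2 (ip0 (pa st 2) (pa st 3) (kap st 2) (kap st 3)) (ip0 (pa st (Suc 0)) (pa st 4) WW 0)
   0 (ip0 (pa st (Suc 0)) (pa st 4) (kap st (Suc 0)) (kap st 4))"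
definition "MM1 = mat2 (ip1 (pa st 2) (pa st 3) (kap st 2) (kap st 3)) (ip1 (pa st (Suc 0)) (pa st 4) WW 0)
   0 (ip1 (pa st (Suc 0)) (pa st 4) (kap st (Suc 0)) (kap st 4))"

lemma eqs: "lax_eqs st A0 A1 \<longleftrightarrow> A0 = MM0 \<and> A1 = MM1"
proof -
  have d14': "pa st (Suc 0) \<noteq> pa st 4" using d14 by simp
  have e: "lax_eqs st A0 A1 \<longleftrightarrow> ((A0 $ 1 $ 1 + pa st (Suc 0) * A1 $ 1 $ 1) * al11 st +
      (A0 $ 1 $ 2 + pa st (Suc 0) * A1 $ 1 $ 2) * al21 st = kap st (Suc 0) * al11 st \<and>
      (A0 $ 2 $ 1 + pa st (Suc 0) * A1 $ 2 $ 1) * al11 st +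
      (A0 $ 2 $ 2 + pa st (Suc 0) * A1 $ 2 $ 2) * al21 st = kap st (Suc 0) * al21 st \<and>
      A0 $ 1 $ 1 + pa st 2 * A1 $ 1 $ 1 = kap st 2 \<and>
      A0 $ 2 $ 1 + pa st 2 * A1 $ 2 $ 1 = 0 \<and>
      A0 $ 1 $ 1 + pa st 3 * A1 $ 1 $ 1 = kap st 3 \<and>
      A0 $ 2 $ 1 + pa st 3 * A1 $ 2 $ 1 = 0 \<and>
      A0 $ 1 $ 2 + pa st 4 * A1 $ 1 $ 2 = 0 \<and>
      A0 $ 2 $ 2 + pa st 4 * A1 $ 2 $ 2 = kap st 4)"
    unfolding lax_eqs_iff
    by (simp add: lax_at_entry4 alphaV_simps betaV_simps alphaV_simps' betaV_simps' forall_2 sum_2 z nz)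
  show ?thesis unfolding e MM0_def MM1_def mat2_eq WW_def conj_assoc
    by (rule F5_alg[OF d23 d14' nz(2)])
qed

lemma sol: "lax_solution st = (MM0, MM1)"
  unfolding lax_solution_def using eqs by (intro the_equality) auto

lemma ham: "Ham p2 p3 p4 p5 st = Hr (pa st) (kap st)"
proof -
  have bz: "\<forall>s\<in>{1..4}. s \<noteq> 1 \<longrightarrow> betaV st s = 0"
  proof (intro ballI impI)
    fix s :: nat assume "s \<in> {1..4}" "s \<noteq> 1"
    hence "s = 2 \<or> s = 3 \<or> s = 4" by auto
    thus "betaV st s = 0" using z by (auto simp: betaV_simps betaV_simps' vec00)
  qed
  have s1: "(1::nat) \<in> {1..4}" by simp
  note H = Ham_formula[OF sol laxz_collapse[OF s1 bz] Sf_def]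
  show ?thesis unfolding H
    by (simp add: Hr_ip d14 d23 MM0_def MM1_def outer_def alphaV_simps betaV_simps alphaV_simps' betaV_simps' z power2_eq_square)
qed
end

locale F6loc =
  fixes st :: phase
  assumes d14: "pa st 1 \<noteq> pa st 4" and d23: "pa st 2 \<noteq> pa st 3"
    and z: "al11 st = 0" "be11 st = 0" "be21 st = 0" "be12 st = 0" "be22 st = 0" "be23 st = 0" "be14 st = 0"
    and nz: "al12 st \<noteq> 0" "al21 st \<noteq> 0"
begin

definition "WW = al22 st * (kap st 2 - (ip0 (pa st (Suc 0)) (pa st 4) (kap st (Suc 0)) (kap st 4)
   + pa st 2 * ip1 (pa st (Suc 0)) (pa st 4) (kap st (Suc 0)) (kap st 4))) / al12 st"

definition "MM0 = mat2 (ip0 (pa st 2) (pa st 3) (kap st 2) (kap st 3)) 0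
   (ip0 (pa st 2) (pa st 3) WW 0) (ip0 (pa st (Suc 0)) (pa st 4) (kap st (Suc 0)) (kap st 4))"
definition "MM1 = mat2 (ip1 (pa st 2) (pa st 3) (kap st 2) (kap st 3)) 0
   (ip1 (pa st 2) (pa st 3) WW 0) (ip1 (pa st (Suc 0)) (pa st 4) (kap st (Suc 0)) (kap st 4))"

lemma eqs: "lax_eqs st A0 A1 \<longleftrightarrow> A0 = MM0 \<and> A1 = MM1"
proof -
  have d14': "pa st (Suc 0) \<noteq> pa st 4" using d14 by simp
  have e: "lax_eqs st A0 A1 \<longleftrightarrow> (A0 $ 1 $ 2 + pa st (Suc 0) * A1 $ 1 $ 2 = 0 \<and>
      A0 $ 2 $ 2 + pa st (Suc 0) * A1 $ 2 $ 2 = kap st (Suc 0) \<and>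
      (A0 $ 1 $ 1 + pa st 2 * A1 $ 1 $ 1) * al12 st +
      (A0 $ 1 $ 2 + pa st 2 * A1 $ 1 $ 2) * al22 st = kap st 2 * al12 st \<and>
      (A0 $ 2 $ 1 + pa st 2 * A1 $ 2 $ 1) * al12 st +
      (A0 $ 2 $ 2 + pa st 2 * A1 $ 2 $ 2) * al22 st = kap st 2 * al22 st \<and>
      A0 $ 1 $ 1 + pa st 3 * A1 $ 1 $ 1 = kap st 3 \<and>
      A0 $ 2 $ 1 + pa st 3 * A1 $ 2 $ 1 = 0 \<and>
      A0 $ 1 $ 2 + pa st 4 * A1 $ 1 $ 2 = 0 \<and>
      A0 $ 2 $ 2 + pa st 4 * A1 $ 2 $ 2 = kap st 4)"
    unfolding lax_eqs_iff
    by (simp add: lax_at_entry4 alphaV_simps betaV_simps alphaV_simps' betaV_simps' forall_2 sum_2 z nz)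
  show ?thesis unfolding e MM0_def MM1_def mat2_eq WW_def conj_assoc
    by (rule F6_alg[OF d23 d14' nz(1)])
qed

lemma sol: "lax_solution st = (MM0, MM1)"
  unfolding lax_solution_def using eqs by (intro the_equality) auto

lemma ham: "Ham p2 p3 p4 p5 st = Hr (pa st) (kap st)"
proof -
  have bz: "\<forall>s\<in>{1..4}. s \<noteq> 1 \<longrightarrow> betaV st s = 0"
  proof (intro ballI impI)
    fix s :: nat assume "s \<in> {1..4}" "s \<noteq> 1"
    hence "s = 2 \<or> s = 3 \<or> s = 4" by auto
    thus "betaV st s = 0" using z by (auto simp: betaV_simps betaV_simps' vec00)
  qed
  have s1: "(1::nat) \<in> {1..4}" by simp
  note H = Ham_formula[OF sol laxz_collapse[OF s1 bz] Sf_def]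
  show ?thesis unfolding H
    by (simp add: Hr_ip d14 d23 MM0_def MM1_def outer_def alphaV_simps betaV_simps alphaV_simps' betaV_simps' z power2_eq_square)
qed
end



no_notation fps_nth (infixl "$" 75)

lemma Hr_dk1: assumes "a 1 \<noteq> a 4" "a 2 \<noteq> a 3"
  shows "((\<lambda>t. Hr a (k(1 := t))) has_field_derivative adot a k 1) (at (k 1))"
proof -
  have n: "a (Suc 0) \<noteq> a 4" "a 2 \<noteq> a 3" using assms by auto
  show ?thesis unfolding Hr_def adot_def
    apply (auto intro!: derivative_eq_intros simp: n)
    apply (simp add: field_simps n)
    apply (algebra)?
    done
qed

lemma Hr_da1: assumes "a 1 \<noteq> a 4" "a 2 \<noteq> a 3"
  shows "((\<lambda>t. Hr (a(1 := t)) k) has_field_derivative - kdot a k 1) (at (a 1))"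
proof -
  have n: "a (Suc 0) \<noteq> a 4" "a 2 \<noteq> a 3" using assms by auto
  show ?thesis unfolding Hr_def kdot_def adot_def
    apply (auto intro!: derivative_eq_intros simp: n)
    apply (simp add: field_simps n)
    apply (algebra)?
    done
qed

lemma Hr_dk2: assumes "a 1 \<noteq> a 4" "a 2 \<noteq> a 3"
  shows "((\<lambda>t. Hr a (k(2 := t))) has_field_derivative adot a k 2) (at (k 2))"
proof -
  have n: "a (Suc 0) \<noteq> a 4" "a 2 \<noteq> a 3" using assms by auto
  show ?thesis unfolding Hr_def adot_def
    apply (auto intro!: derivative_eq_intros simp: n)
    apply (simp add: field_simps n)
    apply (algebra)?
    done
qed

lemma Hr_da2: assumes "a 1 \<noteq> a 4" "a 2 \<noteq> a 3"
  shows "((\<lambda>t. Hr (a(2 := t)) k) has_field_derivative - kdot a k 2) (at (a 2))"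
proof -
  have n: "a (Suc 0) \<noteq> a 4" "a 2 \<noteq> a 3" using assms by auto
  show ?thesis unfolding Hr_def kdot_def adot_def
    apply (auto intro!: derivative_eq_intros simp: n)
    apply (simp add: field_simps n)
    apply (algebra)?
    done
qed

lemma Hr_dk3: assumes "a 1 \<noteq> a 4" "a 2 \<noteq> a 3"
  shows "((\<lambda>t. Hr a (k(3 := t))) has_field_derivative adot a k 3) (at (k 3))"
proof -
  have n: "a (Suc 0) \<noteq> a 4" "a 2 \<noteq> a 3" using assms by auto
  show ?thesis unfolding Hr_def adot_def
    apply (auto intro!: derivative_eq_intros simp: n)
    apply (simp add: field_simps n)
    apply (algebra)?
    done
qed

lemma Hr_da3: assumes "a 1 \<noteq> a 4" "a 2 \<noteq> a 3"
  shows "((\<lambda>t. Hr (a(3 := t)) k) has_field_derivative - kdot a k 3) (at (a 3))"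
proof -
  have n: "a (Suc 0) \<noteq> a 4" "a 2 \<noteq> a 3" using assms by auto
  show ?thesis unfolding Hr_def kdot_def adot_def
    apply (auto intro!: derivative_eq_intros simp: n)
    apply (simp add: field_simps n)
    apply (algebra)?
    done
qed

lemma Hr_dk4: assumes "a 1 \<noteq> a 4" "a 2 \<noteq> a 3"
  shows "((\<lambda>t. Hr a (k(4 := t))) has_field_derivative adot a k 4) (at (k 4))"
proof -
  have n: "a (Suc 0) \<noteq> a 4" "a 2 \<noteq> a 3" using assms by auto
  show ?thesis unfolding Hr_def adot_def
    apply (auto intro!: derivative_eq_intros simp: n)
    apply (simp add: field_simps n)
    apply (algebra)?
    done
qed

lemma Hr_da4: assumes "a 1 \<noteq> a 4" "a 2 \<noteq> a 3"
  shows "((\<lambda>t. Hr (a(4 := t)) k) has_field_derivative - kdot a k 4) (at (a 4))"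
proof -
  have n: "a (Suc 0) \<noteq> a 4" "a 2 \<noteq> a 3" using assms by auto
  show ?thesis unfolding Hr_def kdot_def adot_def
    apply (auto intro!: derivative_eq_intros simp: n)
    apply (simp add: field_simps n)
    apply (algebra)?
    done
qed


no_notation fps_nth (infixl "$" 75)

lemma mat2_add_nth [simp]:
  "(A + mat2 a b c d) $ 1 $ 1 = A $ 1 $ 1 + a" "(A + mat2 a b c d) $ 1 $ 2 = A $ 1 $ 2 + b"
  "(A + mat2 a b c d) $ 2 $ 1 = A $ 2 $ 1 + c" "(A + mat2 a b c d) $ 2 $ 2 = A $ 2 $ 2 + d"
  by simp_all

lemma nz21:
  assumes z: "al11 st = 0" "al22 st = 0" "be11 st = 0" "be21 st = 0" "be12 st = 0" "be22 st = 0" "be23 st = 0" "be14 st = 0"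
    and u: "\<exists>!A. lax_eqs st (fst A) (snd A)"
  shows "al21 st \<noteq> 0"
proof
  assume a: "al21 st = 0"
  from u obtain A where A: "lax_eqs st (fst A) (snd A)" by auto
  have key: "lax_eqs st (X + mat2 0 0 0 (- pa st 4)) (Y + mat2 0 0 0 1) \<longleftrightarrow> lax_eqs st X Y" for X Y
    unfolding lax_eqs_iff
    by (simp add: lax_at_entry4 alphaV_simps betaV_simps alphaV_simps' betaV_simps' forall_2 sum_2 z a algebra_simps)
  have "lax_eqs st (fst (fst A + mat2 0 0 0 (- pa st 4), snd A + mat2 0 0 0 1))
      (snd (fst A + mat2 0 0 0 (- pa st 4), snd A + mat2 0 0 0 1))" using A key by simp
  hence "(fst A + mat2 0 0 0 (- pa st 4), snd A + mat2 0 0 0 1) = A" using u A by blast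
  hence e: "snd A + mat2 0 0 0 1 = snd A" by (metis snd_conv)
  have "(snd A + mat2 0 0 0 1) $ 2 $ 2 = snd A $ 2 $ 2" by (simp only: e)
  thus False by simp
qed

lemma nz12:
  assumes z: "al11 st = 0" "al22 st = 0" "be11 st = 0" "be21 st = 0" "be12 st = 0" "be22 st = 0" "be23 st = 0" "be14 st = 0"
    and u: "\<exists>!A. lax_eqs st (fst A) (snd A)"
  shows "al12 st \<noteq> 0"
proof
  assume a: "al12 st = 0"
  from u obtain A where A: "lax_eqs st (fst A) (snd A)" by auto
  have key: "lax_eqs st (X + mat2 (- pa st 3) 0 0 0) (Y + mat2 1 0 0 0) \<longleftrightarrow> lax_eqs st X Y" for X Y
    unfolding lax_eqs_iff
    by (simp add: lax_at_entry4 alphaV_simps betaV_simps alphaV_simps' betaV_simps' forall_2 sum_2 z a algebra_simps)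
  have "lax_eqs st (fst (fst A + mat2 (- pa st 3) 0 0 0, snd A + mat2 1 0 0 0))
      (snd (fst A + mat2 (- pa st 3) 0 0 0, snd A + mat2 1 0 0 0))" using A key by simp
  hence "(fst A + mat2 (- pa st 3) 0 0 0, snd A + mat2 1 0 0 0) = A" using u A by blast
  hence e: "snd A + mat2 1 0 0 0 = snd A" by (metis snd_conv)
  have "(snd A + mat2 1 0 0 0) $ 1 $ 1 = snd A $ 1 $ 1" by (simp only: e)
  thus False by simp
qed



no_notation fps_nth (infixl "$" 75)

lemma M1_Hr: "M1loc st \<Longrightarrow> be21 st = 0 \<Longrightarrow> Ham p2 p3 p4 p5 st = Hr (pa st) (kap st)"
  using M1loc.ham[of st p2 p3 p4 p5] by (simp add: M1loc.K22_def)

lemma M2_Hr: "M2loc st \<Longrightarrow> be12 st = 0 \<Longrightarrow> Ham p2 p3 p4 p5 st = Hr (pa st) (kap st)"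
  using M2loc.ham[of st p2 p3 p4 p5] by (simp add: M2loc.K11_def)

lemma M2_ham': assumes "M2loc st"
  shows "Ham p2 p3 p4 p5 st = Hr (pa st) ((kap st)(3 := kap st 3 - (pb st 3 + pb st 2) * (al12 st * be12 st) / (pa st 3 - pa st 2)))
   - (al12 st * be12 st) ^ 2 * fls_residue (Wf p2 p3 p4 p5 * (Sf p2 p3 p4 p5 st 2 * Sf p2 p3 p4 p5 st 2))"
  using M2loc.ham[OF assms, of p2 p3 p4 p5] unfolding M2loc.K11_def[OF assms] .

lemma M1_ham': assumes "M1loc st"
  shows "Ham p2 p3 p4 p5 st = Hr (pa st) ((kap st)(4 := kap st 4 - (pb st 4 + pb st (Suc 0)) * (al21 st * be21 st) / (pa st 4 - pa st (Suc 0))))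
   - (al21 st * be21 st) ^ 2 * fls_residue (Wf p2 p3 p4 p5 * (Sf p2 p3 p4 p5 st 1 * Sf p2 p3 p4 p5 st 1))"
  using M1loc.ham[OF assms, of p2 p3 p4 p5] unfolding M1loc.K22_def[OF assms] .

lemma Hr_dk_all: "s \<in> {1..4} \<Longrightarrow> a 1 \<noteq> a 4 \<Longrightarrow> a 2 \<noteq> a 3 \<Longrightarrow>
   ((\<lambda>t. Hr a (k(s := t))) has_field_derivative adot a k s) (at (k s))"
proof -
  assume "s \<in> {1..4}" "a 1 \<noteq> a 4" "a 2 \<noteq> a 3"
  moreover have "s = 1 \<or> s = 2 \<or> s = 3 \<or> s = 4" using \<open>s \<in> {1..4}\<close> by auto
  ultimately show ?thesis using Hr_dk1 Hr_dk2 Hr_dk3 Hr_dk4 by blast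
qed

lemma Hr_da_all: "s \<in> {1..4} \<Longrightarrow> a 1 \<noteq> a 4 \<Longrightarrow> a 2 \<noteq> a 3 \<Longrightarrow>
   ((\<lambda>t. Hr (a(s := t)) k) has_field_derivative - kdot a k s) (at (a s))"
proof -
  assume "s \<in> {1..4}" "a 1 \<noteq> a 4" "a 2 \<noteq> a 3"
  moreover have "s = 1 \<or> s = 2 \<or> s = 3 \<or> s = 4" using \<open>s \<in> {1..4}\<close> by auto
  ultimately show ?thesis using Hr_da1 Hr_da2 Hr_da3 Hr_da4 by blast
qed

lemma open_neq0: "open {t::complex. t \<noteq> 0}"
proof -
  have "{t::complex. t \<noteq> 0} = - {0}" by auto
  thus ?thesis using open_Compl[OF closed_singleton[of 0]] by simp
qed

theorem proposition1:
  fixes p2 p3 p4 p5 :: complex and st :: phase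
    and bf :: "nat \<Rightarrow> complex \<Rightarrow> complex" and U :: "nat \<Rightarrow> complex set"
  assumes distinct_a: "\<forall>s\<in>{1..4::nat}. \<forall>t\<in>{1..4}. s \<noteq> t \<longrightarrow> pa st s \<noteq> pa st t"
    and branch: "\<forall>s\<in>{1..4::nat}. open (U s) \<and> pa st s \<in> U s \<and> bf s holomorphic_on U s
                   \<and> (\<forall>x\<in>U s. (bf s x)^2 = Pc p2 p3 p4 p5 x) \<and> pb st s = bf s (pa st s)"
    and Z: "al11 st = 0" "al22 st = 0" "be11 st = 0" "be21 st = 0" "be12 st = 0"
           "be22 st = 0" "be23 st = 0" "be14 st = 0"
    and defined: "\<exists>!A. lax_eqs st (fst A) (snd A)"
  shows
    "(((\<lambda>t. Ham p2 p3 p4 p5 (st\<lparr>be11 := t\<rparr>)) has_field_derivative 0) (at (be11 st))) \<and>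
     (((\<lambda>t. Ham p2 p3 p4 p5 (st\<lparr>be22 := t\<rparr>)) has_field_derivative 0) (at (be22 st))) \<and>
     (((\<lambda>t. Ham p2 p3 p4 p5 (st\<lparr>al11 := t\<rparr>)) has_field_derivative 0) (at (al11 st))) \<and>
     (((\<lambda>t. Ham p2 p3 p4 p5 (st\<lparr>al21 := t\<rparr>)) has_field_derivative 0) (at (al21 st))) \<and>
     (((\<lambda>t. Ham p2 p3 p4 p5 (st\<lparr>al12 := t\<rparr>)) has_field_derivative 0) (at (al12 st))) \<and>
     (((\<lambda>t. Ham p2 p3 p4 p5 (st\<lparr>al22 := t\<rparr>)) has_field_derivative 0) (at (al22 st))) \<and>
     (Ham p2 p3 p4 p5 st = Hr (pa st) (kap st)) \<and>
     (\<forall>s\<in>{1..4::nat}. ((\<lambda>t. Ham p2 p3 p4 p5 (st\<lparr>kap := (kap st)(s := t)\<rparr>))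
        has_field_derivative adot (pa st) (kap st) s) (at (kap st s))) \<and>
     (\<forall>s\<in>{1..4::nat}. ((\<lambda>t. Ham p2 p3 p4 p5 (st\<lparr>pa := (pa st)(s := t), pb := (pb st)(s := bf s t)\<rparr>))
        has_field_derivative - kdot (pa st) (kap st) s) (at (pa st s))) \<and>
     (((\<lambda>t. Ham p2 p3 p4 p5 (st\<lparr>be12 := t\<rparr>)) has_field_derivative
        al12 st * (pb st 2 + pb st 3) / (pa st 2 - pa st 3) * adot (pa st) (kap st) 3) (at (be12 st))) \<and>
     (((\<lambda>t. Ham p2 p3 p4 p5 (st\<lparr>be21 := t\<rparr>)) has_field_derivative
        al21 st * (pb st 1 + pb st 4) / (pa st 1 - pa st 4) * adot (pa st) (kap st) 4) (at (be21 st))) \<and>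
     (\<forall>s\<in>{1..4::nat}. ((\<lambda>t. Hr (pa st) ((kap st)(s := t)))
        has_field_derivative adot (pa st) (kap st) s) (at (kap st s))) \<and>
     (\<forall>s\<in>{1..4::nat}. ((\<lambda>t. Hr ((pa st)(s := t)) (kap st))
        has_field_derivative - kdot (pa st) (kap st) s) (at (pa st s)))"
proof -
  have d: "\<And>s t. s \<in> {1..4::nat} \<Longrightarrow> t \<in> {1..4} \<Longrightarrow> s \<noteq> t \<Longrightarrow> pa st s \<noteq> pa st t"
    using distinct_a by blast
  have d14: "pa st 1 \<noteq> pa st 4" by (rule d) auto
  have d23: "pa st 2 \<noteq> pa st 3" by (rule d) auto
  have n21: "al21 st \<noteq> 0" by (rule nz21[OF Z defined])
  have n12: "al12 st \<noteq> 0" by (rule nz12[OF Z defined])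
  have d14': "pa st (Suc 0) \<noteq> pa st 4" using d14 by simp
  note ZZ = Z d14 d23 n21 n12 d14'
  have M1st: "M1loc st" by (unfold_locales) (simp_all add: ZZ)
  have H0: "Ham p2 p3 p4 p5 st = Hr (pa st) (kap st)" by (rule M1_Hr[OF M1st]) (simp add: ZZ)
  have c1: "((\<lambda>t. Ham p2 p3 p4 p5 (st\<lparr>be11 := t\<rparr>)) has_field_derivative 0) (at (be11 st))"
  proof -
    have "\<And>t. Ham p2 p3 p4 p5 (st\<lparr>be11 := t\<rparr>) = Hr (pa st) (kap st)"
      by (rule M1_Hr[THEN trans]) (unfold_locales, simp_all add: ZZ)
    thus ?thesis by simp
  qed
  have c2: "((\<lambda>t. Ham p2 p3 p4 p5 (st\<lparr>be22 := t\<rparr>)) has_field_derivative 0) (at (be22 st))"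
  proof -
    have "\<And>t. Ham p2 p3 p4 p5 (st\<lparr>be22 := t\<rparr>) = Hr (pa st) (kap st)"
      by (rule M2_Hr[THEN trans]) (unfold_locales, simp_all add: ZZ)
    thus ?thesis by simp
  qed
  have c3: "((\<lambda>t. Ham p2 p3 p4 p5 (st\<lparr>al11 := t\<rparr>)) has_field_derivative 0) (at (al11 st))"
  proof -
    have "\<And>t. Ham p2 p3 p4 p5 (st\<lparr>al11 := t\<rparr>) = Hr (pa st) (kap st)"
      by (rule F5loc.ham[THEN trans]) (unfold_locales, simp_all add: ZZ)
    thus ?thesis by simp
  qed
  have c6: "((\<lambda>t. Ham p2 p3 p4 p5 (st\<lparr>al22 := t\<rparr>)) has_field_derivative 0) (at (al22 st))"
  proof -
    have "\<And>t. Ham p2 p3 p4 p5 (st\<lparr>al22 := t\<rparr>) = Hr (pa st) (kap st)"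
      by (rule F6loc.ham[THEN trans]) (unfold_locales, simp_all add: ZZ)
    thus ?thesis by simp
  qed
  have c4: "((\<lambda>t. Ham p2 p3 p4 p5 (st\<lparr>al21 := t\<rparr>)) has_field_derivative 0) (at (al21 st))"
  proof (rule has_field_derivative_transform_within_open[OF DERIV_const open_neq0])
    show "al21 st \<in> {t. t \<noteq> 0}" using n21 by simp
    fix t :: complex assume "t \<in> {t. t \<noteq> 0}"
    hence "t \<noteq> 0" by simp
    have "M1loc (st\<lparr>al21 := t\<rparr>)" by unfold_locales (simp_all add: ZZ \<open>t \<noteq> 0\<close>)
    from M1_Hr[OF this, of p2 p3 p4 p5]
    show "Hr (pa st) (kap st) = Ham p2 p3 p4 p5 (st\<lparr>al21 := t\<rparr>)" by (simp add: ZZ)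
  qed
  have c5: "((\<lambda>t. Ham p2 p3 p4 p5 (st\<lparr>al12 := t\<rparr>)) has_field_derivative 0) (at (al12 st))"
  proof (rule has_field_derivative_transform_within_open[OF DERIV_const open_neq0])
    show "al12 st \<in> {t. t \<noteq> 0}" using n12 by simp
    fix t :: complex assume "t \<in> {t. t \<noteq> 0}"
    hence "t \<noteq> 0" by simp
    have "M1loc (st\<lparr>al12 := t\<rparr>)" by unfold_locales (simp_all add: ZZ \<open>t \<noteq> 0\<close>)
    from M1_Hr[OF this, of p2 p3 p4 p5]
    show "Hr (pa st) (kap st) = Ham p2 p3 p4 p5 (st\<lparr>al12 := t\<rparr>)" by (simp add: ZZ)
  qed
  have c12: "\<forall>s\<in>{1..4::nat}. ((\<lambda>t. Hr (pa st) ((kap st)(s := t)))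
        has_field_derivative adot (pa st) (kap st) s) (at (kap st s))"
    using Hr_dk_all d14 d23 by blast
  have c13: "\<forall>s\<in>{1..4::nat}. ((\<lambda>t. Hr ((pa st)(s := t)) (kap st))
        has_field_derivative - kdot (pa st) (kap st) s) (at (pa st s))"
    using Hr_da_all d14 d23 by blast
  have c8: "\<forall>s\<in>{1..4::nat}. ((\<lambda>t. Ham p2 p3 p4 p5 (st\<lparr>kap := (kap st)(s := t)\<rparr>))
        has_field_derivative adot (pa st) (kap st) s) (at (kap st s))"
  proof
    fix s :: nat assume s: "s \<in> {1..4}"
    have "\<And>t. Ham p2 p3 p4 p5 (st\<lparr>kap := (kap st)(s := t)\<rparr>) = Hr (pa st) ((kap st)(s := t))"
      by (rule M1_Hr[THEN trans]) (unfold_locales, simp_all add: ZZ)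
    thus "((\<lambda>t. Ham p2 p3 p4 p5 (st\<lparr>kap := (kap st)(s := t)\<rparr>))
        has_field_derivative adot (pa st) (kap st) s) (at (kap st s))" using c12 s by simp
  qed
  have c9: "\<forall>s\<in>{1..4::nat}. ((\<lambda>t. Ham p2 p3 p4 p5 (st\<lparr>pa := (pa st)(s := t), pb := (pb st)(s := bf s t)\<rparr>))
        has_field_derivative - kdot (pa st) (kap st) s) (at (pa st s))"
  proof
    fix s :: nat assume s: "s \<in> {1..4}"
    define S where "S = - (pa st ` ({1..4} - {s}))"
    have oS: "open S" unfolding S_def by (intro open_Compl finite_imp_closed) auto
    have aS: "pa st s \<in> S"
    proof -
      have "pa st s \<noteq> pa st u" if "u \<in> {1..4} - {s}" for u using d[of s u] s that by auto
      thus ?thesis unfolding S_def by blast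
    qed
    show "((\<lambda>t. Ham p2 p3 p4 p5 (st\<lparr>pa := (pa st)(s := t), pb := (pb st)(s := bf s t)\<rparr>))
        has_field_derivative - kdot (pa st) (kap st) s) (at (pa st s))"
    proof (rule has_field_derivative_transform_within_open[OF bspec[OF c13 s] oS aS])
      fix t assume t: "t \<in> S"
      have tn: "\<And>u. u \<in> {1..4} \<Longrightarrow> u \<noteq> s \<Longrightarrow> t \<noteq> pa st u" using t unfolding S_def by auto
      have e14: "((pa st)(s := t)) 1 \<noteq> ((pa st)(s := t)) 4"
        using tn[of 1] tn[of 4] d14 s by auto
      have e23: "((pa st)(s := t)) 2 \<noteq> ((pa st)(s := t)) 3"
        using tn[of 2] tn[of 3] d23 s by auto
      show "Hr ((pa st)(s := t)) (kap st) = Ham p2 p3 p4 p5 (st\<lparr>pa := (pa st)(s := t), pb := (pb st)(s := bf s t)\<rparr>)"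
      proof -
        have "M1loc (st\<lparr>pa := (pa st)(s := t), pb := (pb st)(s := bf s t)\<rparr>)"
          by unfold_locales (use e14 e23 in \<open>simp_all add: ZZ\<close>)
        from M1_Hr[OF this, of p2 p3 p4 p5] show ?thesis by (simp add: ZZ)
      qed
    qed
  qed
  have c10: "((\<lambda>t. Ham p2 p3 p4 p5 (st\<lparr>be12 := t\<rparr>)) has_field_derivative
        al12 st * (pb st 2 + pb st 3) / (pa st 2 - pa st 3) * adot (pa st) (kap st) 3) (at (be12 st))"
  proof -
    define e where "e = fls_residue (Wf p2 p3 p4 p5 * (Sf p2 p3 p4 p5 st 2 * Sf p2 p3 p4 p5 st 2))"
    define c where "c = (pb st 3 + pb st 2) * al12 st / (pa st 3 - pa st 2)"
    define g where "g = (\<lambda>t. kap st 3 - (pb st 3 + pb st 2) * (al12 st * t) / (pa st 3 - pa st 2))"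
    have eq: "\<And>t. Ham p2 p3 p4 p5 (st\<lparr>be12 := t\<rparr>) = Hr (pa st) ((kap st)(3 := g t)) - (al12 st * t)^2 * e"
    proof -
      fix t
      have "M2loc (st\<lparr>be12 := t\<rparr>)" by unfold_locales (simp_all add: ZZ)
      from M2_ham'[OF this, of p2 p3 p4 p5]
      show "Ham p2 p3 p4 p5 (st\<lparr>be12 := t\<rparr>) = Hr (pa st) ((kap st)(3 := g t)) - (al12 st * t)^2 * e"
        by (simp add: g_def e_def Sf_def)
    qed
    have dg: "(g has_field_derivative - c) (at 0)"
      unfolding g_def c_def using d23 d14' by (auto intro!: derivative_eq_intros)
    have g0: "g 0 = kap st 3" by (simp add: g_def)
    have dH: "((\<lambda>u. Hr (pa st) ((kap st)(3 := u))) has_field_derivative adot (pa st) (kap st) 3) (at (g 0))"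
      unfolding g0 using bspec[OF c12, of 3] by simp
    have d1: "((\<lambda>t. Hr (pa st) ((kap st)(3 := g t))) has_field_derivative adot (pa st) (kap st) 3 * - c) (at 0)"
      by (rule DERIV_chain2[OF dH dg])
    have d2: "((\<lambda>t. (al12 st * t)^2 * e) has_field_derivative 0) (at 0)"
      by (auto intro!: derivative_eq_intros)
    note d3 = DERIV_diff[OF d1 d2]
    have val: "adot (pa st) (kap st) 3 * - c - 0 = al12 st * (pb st 2 + pb st 3) / (pa st 2 - pa st 3) * adot (pa st) (kap st) 3"
      unfolding c_def using d23 d23[symmetric] by (simp add: field_simps)
    show ?thesis unfolding eq using DERIV_cong[OF d3 val] Z(5) by simp
  qed
  have c11: "((\<lambda>t. Ham p2 p3 p4 p5 (st\<lparr>be21 := t\<rparr>)) has_field_derivative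
        al21 st * (pb st 1 + pb st 4) / (pa st 1 - pa st 4) * adot (pa st) (kap st) 4) (at (be21 st))"
  proof -
    define e where "e = fls_residue (Wf p2 p3 p4 p5 * (Sf p2 p3 p4 p5 st 1 * Sf p2 p3 p4 p5 st 1))"
    define c where "c = (pb st 4 + pb st (Suc 0)) * al21 st / (pa st 4 - pa st (Suc 0))"
    define g where "g = (\<lambda>t. kap st 4 - (pb st 4 + pb st (Suc 0)) * (al21 st * t) / (pa st 4 - pa st (Suc 0)))"
    have eq: "\<And>t. Ham p2 p3 p4 p5 (st\<lparr>be21 := t\<rparr>) = Hr (pa st) ((kap st)(4 := g t)) - (al21 st * t)^2 * e"
    proof -
      fix t
      have "M1loc (st\<lparr>be21 := t\<rparr>)" by unfold_locales (simp_all add: ZZ)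
      from M1_ham'[OF this, of p2 p3 p4 p5]
      show "Ham p2 p3 p4 p5 (st\<lparr>be21 := t\<rparr>) = Hr (pa st) ((kap st)(4 := g t)) - (al21 st * t)^2 * e"
        by (simp add: g_def e_def Sf_def)
    qed
    have dg: "(g has_field_derivative - c) (at 0)"
      unfolding g_def c_def using d23 d14' by (auto intro!: derivative_eq_intros)
    have g0: "g 0 = kap st 4" by (simp add: g_def)
    have dH: "((\<lambda>u. Hr (pa st) ((kap st)(4 := u))) has_field_derivative adot (pa st) (kap st) 4) (at (g 0))"
      unfolding g0 using bspec[OF c12, of 4] by simp
    have d1: "((\<lambda>t. Hr (pa st) ((kap st)(4 := g t))) has_field_derivative adot (pa st) (kap st) 4 * - c) (at 0)"
      by (rule DERIV_chain2[OF dH dg])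
    have d2: "((\<lambda>t. (al21 st * t)^2 * e) has_field_derivative 0) (at 0)"
      by (auto intro!: derivative_eq_intros)
    note d3 = DERIV_diff[OF d1 d2]
    have val: "adot (pa st) (kap st) 4 * - c - 0 = al21 st * (pb st 1 + pb st 4) / (pa st 1 - pa st 4) * adot (pa st) (kap st) 4"
      unfolding c_def using d14' d14'[symmetric] by (simp add: field_simps)
    show ?thesis unfolding eq using DERIV_cong[OF d3 val] Z(4) by simp
  qed
  show ?thesis by (intro conjI c1 c2 c3 c4 c5 c6 H0 c8 c9 c10 c11 c12 c13)
qed


end
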